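(* Let $k\ge1$ be an integer. If $k$ is even, then $A(3k,k)$ is nonsingular, i.e. $N(3k,k)=0$. If $k\equiv1\pmod4$ then $N(3k,k)=1$, and if $k\equiv3\pmod4$ then $N(3k,k)=3$.
   Context: For $n>k\ge1$, $A(n,k)$ is the $n\times n$ skew-symmetric Toeplitz matrix whose first $k$ superdiagonals have all entries $1$ and whose remaining superdiagonals have all entries $0$, and $N(n,k)$ is its nullity. *)

theory Defs
  imports "Jordan_Normal_Form.Matrix_Kernel"
begin

definition A_mat :: "nat \<Rightarrow> nat \<Rightarrow> real mat" where
  "A_mat n k = mat n n (\<lambda>(i, j).
      if i < j \<and> j - i \<le> k then 1
      else if j < i \<and> i - j \<le> k then -1
      else 0)"

definition N_null :: "nat \<Rightarrow> nat \<Rightarrow> nat" where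
  "N_null n k = kernel_dim (A_mat n k)"

end

theory Submission
  imports Defs
begin

lemma kernel_dim_pivots:
  fixes A :: "real mat"
  assumes A: "A \<in> carrier_mat n n"
  and vs: "\<And>i. i < d \<Longrightarrow> vs i \<in> mat_kernel A"
  and ps: "\<And>j. j < d \<Longrightarrow> ps j < n"
  and delta: "\<And>i j. i < d \<Longrightarrow> j < d \<Longrightarrow> vs i $ ps j = (if i = j then 1 else 0)"
  and uniq: "\<And>x. x \<in> mat_kernel A \<Longrightarrow> (\<And>j. j < d \<Longrightarrow> x $ ps j = 0) \<Longrightarrow> x = 0\<^sub>v n"
  shows "kernel_dim A = d"
proof -
  interpret K: kernel n n A by (unfold_locales, rule A)
  let ?B = "vs ` {..<d}"
  have inj: "inj_on vs {..<d}"
  proof (rule inj_onI)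
    fix i j assume "i \<in> {..<d}" "j \<in> {..<d}" "vs i = vs j"
    then have "vs i $ ps j = vs j $ ps j" by simp
    then show "i = j" using delta \<open>i \<in> {..<d}\<close> \<open>j \<in> {..<d}\<close> by (auto split: if_splits)
  qed
  have card: "card ?B = d" using inj by (simp add: card_image)
  have sub: "?B \<subseteq> mat_kernel A" using vs by auto
  have fin: "finite ?B" by simp
  have idx: "K.lincomb a ?B $ ps j = a (vs j)" if j: "j < d" for a j
  proof -
    have "K.lincomb a ?B $ ps j = (\<Sum>w\<in>?B. a w * w $ ps j)"
      by (rule K.lincomb_index[OF ps[OF j] sub])
    also have "\<dots> = (\<Sum>i<d. a (vs i) * vs i $ ps j)"
      by (subst sum.reindex[OF inj], simp)
    also have "\<dots> = (\<Sum>i<d. if i = j then a (vs i) else 0)"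
      by (rule sum.cong, auto simp: delta j)
    also have "\<dots> = a (vs j)" using j by simp
    finally show ?thesis .
  qed
  have li: "K.lin_indpt ?B"
    proof (rule K.Ker.finite_lin_indpt2[OF fin sub])
      fix a assume lc: "K.lincomb a ?B = 0\<^sub>v n"
      show "\<forall>v\<in>?B. a v = 0"
      proof
        fix v assume "v \<in> ?B"
        then obtain j where j: "j < d" and v: "v = vs j" by auto
        have "a v = K.lincomb a ?B $ ps j" using idx[OF j] v by simp
        also have "\<dots> = 0" using lc ps[OF j] by simp
        finally show "a v = 0" .
      qed
    qed
    have s1: "K.span ?B \<subseteq> mat_kernel A" using K.Ker.span_is_subset2[OF sub] by simp
      have s2: "mat_kernel A \<subseteq> K.span ?B"
      proof
        fix x assume x: "x \<in> mat_kernel A"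
        define a where "a = (\<lambda>w. x $ ps (the_inv_into {..<d} vs w))"
        let ?y = "K.lincomb a ?B"
        have yspan: "?y \<in> K.span ?B" unfolding K.Ker.span_def
          by (rule CollectI, rule exI[of _ a], rule exI[of _ ?B], simp)
        have yk: "?y \<in> mat_kernel A" using yspan K.Ker.span_is_subset2[OF sub] by auto
        have xc: "x \<in> carrier_vec n" and Ax: "A *\<^sub>v x = 0\<^sub>v n" using mat_kernelD[OF A x] by auto
        have yc: "?y \<in> carrier_vec n" and Ay: "A *\<^sub>v ?y = 0\<^sub>v n" using mat_kernelD[OF A yk] by auto
        have "x - ?y \<in> mat_kernel A"
          by (rule mat_kernelI[OF A], insert xc yc Ax Ay A, auto simp: mult_minus_distrib_mat_vec)
        moreover have "(x - ?y) $ ps j = 0" if j: "j < d" for j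
        proof -
          have "?y $ ps j = a (vs j)" by (rule idx[OF j])
          also have "\<dots> = x $ ps j" unfolding a_def using the_inv_into_f_f[OF inj] j by simp
          finally show ?thesis using xc yc ps[OF j] by simp
        qed
        ultimately have "x - ?y = 0\<^sub>v n" by (rule uniq)
        note z = this
        have "x = ?y"
        proof (rule eq_vecI)
          show "dim_vec x = dim_vec ?y" using xc yc by simp
          fix i assume i: "i < dim_vec ?y"
          then have "(x - ?y) $ i = 0" using z yc by simp
          then show "x $ i = ?y $ i" using i xc yc by simp
        qed
        then show "x \<in> K.span ?B" using yspan by simp
      qed
  have basis: "K.basis ?B"
    unfolding K.Ker.basis_def
  proof (intro conjI)
    show "K.span ?B = mat_kernel A" using equalityI[OF s1 s2] .
  qed (rule li, rule sub)
  have "kernel_dim A = K.dim" by simp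
  also have "\<dots> = card ?B" by (rule K.Ker.dim_basis[OF fin basis])
  finally show ?thesis using card by simp
qed

lemma per4_shift_nat:
  fixes U :: "int \<Rightarrow> real"
  assumes p: "\<And>j. U (j + 4) = U j"
  shows "U (j + 4 * int t) = U j"
proof (induction t)
  case (Suc t)
  have "U (j + 4 * int (Suc t)) = U ((j + 4 * int t) + 4)" by (simp add: algebra_simps)
  also have "\<dots> = U j" using p Suc by simp
  finally show ?case .
qed simp

lemma per4_shift:
  fixes U :: "int \<Rightarrow> real"
  assumes p: "\<And>j. U (j + 4) = U j"
  shows "U (j + 4 * t) = U j"
proof (cases "t \<ge> 0")
  case True
  then show ?thesis using per4_shift_nat[where U=U, OF p, of j "nat t"] by simp
next
  case False
  have "U ((j + 4 * t) + 4 * int (nat (-t))) = U (j + 4 * t)" by (rule per4_shift_nat[where U=U, OF p])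
  then show ?thesis using False by simp
qed

lemma per4_mod:
  fixes U :: "int \<Rightarrow> real"
  assumes p: "\<And>j. U (j + 4) = U j"
  shows "U j = U (j mod 4)"
proof -
  have "U (j mod 4 + 4 * (j div 4)) = U (j mod 4)" by (rule per4_shift[where U=U, OF p])
  then show ?thesis by simp
qed

lemma S4_const:
  fixes U :: "int \<Rightarrow> real"
  assumes p: "\<And>j. U (j + 4) = U j"
  shows "U (j+1) + U j + U (j-1) + U (j-2) = U 0 + U 1 + U 2 + U 3"
proof -
  define r where "r = j mod 4"
  define q where "q = j div 4"
  have j: "j = r + 4 * q" unfolding r_def q_def by simp
  have r: "r \<in> {0,1,2,3}" unfolding r_def by auto
  have sh: "\<And>a. U (a + 4 * q) = U a" by (rule per4_shift[where U=U, OF p])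
  have "U (j+1) = U (r+1)" using sh[of "r+1"] j by (simp add: algebra_simps)
  moreover have "U j = U r" using sh[of r] j by simp
  moreover have "U (j-1) = U (r-1)" using sh[of "r-1"] j by (simp add: algebra_simps)
  moreover have "U (j-2) = U (r-2)" using sh[of "r-2"] j by (simp add: algebra_simps)
  moreover have "U (-1) = U 3" using p[of "-1"] by simp
  moreover have "U (-2) = U 2" using p[of "-2"] by simp
  moreover have "U 4 = U 0" using p[of 0] by simp
  ultimately show ?thesis using r by auto
qed

definition Pf :: "int \<Rightarrow> (int \<Rightarrow> real) \<Rightarrow> int \<Rightarrow> real" where
  "Pf K U m = (if m \<le> 0 then 0 else if m \<le> K then U m
     else if m \<le> 2*K then U (m-K) + U (m-K-1)
     else if m \<le> 3*K then U (m-2*K) + U (m-2*K-1) + U (m-2*K-2)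
     else U K + U (K-1) + U (K-2))"

lemma Pf_E:
  assumes K: "K \<ge> 1"
    and p: "\<And>j. U (j + 4) = (U j :: real)"
    and pk: "\<And>j. U (j + K + 1) = U j"
    and u0: "U 0 = 0"
    and i: "0 \<le> i" "i < 3*K"
  shows "Pf K U (i+K+1) + Pf K U (i-K) = Pf K U (i+1) + Pf K U i"
proof -
  have w1: "U K = U (-1)" using pk[of "-1"] by simp
  have w2: "U (K-1) = U (-2)" using pk[of "-2"] by simp
  have w3: "U (K-3) = 0" using pk[of "-4"] p[of "-4"] u0 by (simp add: algebra_simps)
  consider "i < K" | "K \<le> i" "i < 2*K" | "2*K \<le> i" using i by linarith
  then show ?thesis
  proof cases
    case 1
    then show ?thesis using i K u0 unfolding Pf_def by auto
  next
    case 2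
    then show ?thesis using i K u0 w1 unfolding Pf_def by (auto simp: algebra_simps)
  next
    case 3
    have s1: "U (i-2*K+1) + U (i-2*K) + U (i-2*K-1) + U (i-2*K-2) = U 0 + U 1 + U 2 + U 3"
      using S4_const[where U=U, OF p, of "i-2*K"] by (simp add: algebra_simps)
    have s2: "U K + U (K-1) + U (K-2) + U (K-3) = U 0 + U 1 + U 2 + U 3"
      using S4_const[where U=U, OF p, of "K-1"] by (simp add: algebra_simps)
    show ?thesis using 3 i K u0 w1 w2 w3 s1 s2 unfolding Pf_def by (auto simp: algebra_simps)
  qed
qed

definition psum :: "real vec \<Rightarrow> nat \<Rightarrow> int \<Rightarrow> real" where
  "psum x n m = (\<Sum>j\<in>{j. j < n \<and> int j < m}. x $ j)"

lemma psum_diff: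
  assumes "a \<le> b"
  shows "psum x n b - psum x n a = (\<Sum>j\<in>{j. j < n \<and> a \<le> int j \<and> int j < b}. x $ j)"
proof -
  have eq: "{j. j < n \<and> a \<le> int j \<and> int j < b} = {j. j < n \<and> int j < b} - {j. j < n \<and> int j < a}"
    using assms by auto
  show ?thesis unfolding psum_def eq
    by (subst sum_diff) (use assms in auto)
qed

lemma row_formula:
  assumes x: "dim_vec x = n" and i: "i < n"
  shows "(A_mat n k *\<^sub>v x) $ i =
     (psum x n (int i + int k + 1) - psum x n (int i + 1)) - (psum x n (int i) - psum x n (int i - int k))"
proof -
  let ?S1 = "{j. j < n \<and> int i + 1 \<le> int j \<and> int j < int i + int k + 1}"
  let ?S2 = "{j. j < n \<and> int i - int k \<le> int j \<and> int j < int i}"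
  have "(A_mat n k *\<^sub>v x) $ i = (\<Sum>j<n. (A_mat n k) $$ (i,j) * x $ j)"
    using x i unfolding A_mat_def by (simp add: scalar_prod_def atLeast0LessThan)
  also have "\<dots> = (\<Sum>j<n. (if j \<in> ?S1 then x $ j else 0) - (if j \<in> ?S2 then x $ j else 0))"
    by (rule sum.cong, auto simp: A_mat_def i)
  also have "\<dots> = (\<Sum>j<n. (if j \<in> ?S1 then x $ j else 0)) - (\<Sum>j<n. (if j \<in> ?S2 then x $ j else 0))"
    by (simp add: sum_subtractf)
  also have "(\<Sum>j<n. (if j \<in> ?S1 then x $ j else 0)) = (\<Sum>j\<in>{..<n} \<inter> ?S1. x $ j)"
    by (simp add: sum.inter_restrict)
  also have "{..<n} \<inter> ?S1 = ?S1" by auto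
  also have "(\<Sum>j<n. (if j \<in> ?S2 then x $ j else 0)) = (\<Sum>j\<in>{..<n} \<inter> ?S2. x $ j)"
    by (simp add: sum.inter_restrict)
  also have "{..<n} \<inter> ?S2 = ?S2" by auto
  finally show ?thesis using psum_diff[of "int i + 1" "int i + int k + 1" x n] psum_diff[of "int i - int k" "int i" x n]
    by simp
qed

lemma derive_U:
  fixes P :: "int \<Rightarrow> real" and K :: int
  assumes K: "K \<ge> 1"
    and H0: "\<And>m. m \<le> 0 \<Longrightarrow> P m = 0"
    and Hn: "\<And>m. m \<ge> 3*K \<Longrightarrow> P m = P (3*K)"
    and E: "\<And>i. 0 \<le> i \<Longrightarrow> i < 3*K \<Longrightarrow> P (i+K+1) + P (i-K) = P (i+1) + P i"
  shows "\<exists>U. (\<forall>j. U (j+4) = U j) \<and> (\<forall>j. U (j+K+1) = U j) \<and> U 0 = 0 \<and> (\<forall>m. P m = Pf K U m)"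
proof -
  define u where "u j = (if j = -1 then P K else if j = -2 then P (K-1) else P j)" for j
  have uP: "u j = P j" if "0 \<le> j" for j using that unfolding u_def by auto
  have u0: "u 0 = 0" using H0 uP by simp
  have a: "P (K+m) = u m + u (m-1)" if m: "0 \<le> m" "m \<le> K" for m
  proof (cases "m = 0")
    case True then show ?thesis using u0 by (simp add: u_def)
  next
    case False
    have "P ((m-1)+K+1) + P ((m-1)-K) = P ((m-1)+1) + P (m-1)" using E[of "m-1"] m False K by simp
    moreover have "P ((m-1)-K) = 0" using H0 m by simp
    ultimately show ?thesis using uP[of m] uP[of "m-1"] m False by (simp add: algebra_simps)
  qed
  have b: "P (2*K+m) = u m + u (m-1) + u (m-2)" if m: "0 \<le> m" "m \<le> K" for m
  proof (cases "m = 0")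
    case True
    have "P ((K-1)+K+1) + P ((K-1)-K) = P ((K-1)+1) + P (K-1)" using E[of "K-1"] K by simp
    then show ?thesis using True u0 H0[of "-1"] by (simp add: u_def algebra_simps)
  next
    case False
    have "P ((K+m-1)+K+1) + P ((K+m-1)-K) = P ((K+m-1)+1) + P (K+m-1)" using E[of "K+m-1"] m False K by simp
    moreover have "P (K+m-1) = u (m-1) + u (m-2)" using a[of "m-1"] m False by (simp add: algebra_simps)
    moreover have "P (K+m) = u m + u (m-1)" using a[of m] m by simp
    moreover have "P (m-1) = u (m-1)" using uP[of "m-1"] m False by simp
    ultimately show ?thesis by (simp add: algebra_simps)
  qed
  define C where "C = u K + u (K-1) + u (K-2)"
  have S: "P (3*K) = C" using b[of K] K unfolding C_def by (simp add: algebra_simps)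
  have c: "u (m+1) + u m + u (m-1) + u (m-2) = C" if m: "0 \<le> m" "m \<le> K-1" for m
  proof -
    have "P ((2*K+m)+K+1) + P ((2*K+m)-K) = P ((2*K+m)+1) + P (2*K+m)" using E[of "2*K+m"] m K by simp
    moreover have "P ((2*K+m)+K+1) = C" using Hn[of "(2*K+m)+K+1"] S m by simp
    moreover have "P ((2*K+m)-K) = u m + u (m-1)" using a[of m] m by (simp add: algebra_simps)
    moreover have "P ((2*K+m)+1) = u (m+1) + u m + u (m-1)" using b[of "m+1"] m by (simp add: algebra_simps)
    moreover have "P (2*K+m) = u m + u (m-1) + u (m-2)" using b[of m] m by simp
    ultimately show ?thesis by (simp add: algebra_simps)
  qed
  have d: "u (j+4) = u j" if j: "-2 \<le> j" "j \<le> K-4" for j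
    using c[of "j+2"] c[of "j+3"] j by (simp add: algebra_simps)
  define U where "U j = u (((j+2) mod 4) - 2)" for j
  have U4: "U (j+4) = U j" for j
  proof -
    have "(j+4+2) mod 4 = (j+2) mod 4" by presburger
    then show ?thesis unfolding U_def by simp
  qed
  have uU: "u j = U j" if "-2 \<le> j" "j \<le> K" for j
  proof -
    have "\<forall>j. -2 \<le> j \<and> j \<le> K \<and> nat (j+2) = t \<longrightarrow> u j = U j" for t
    proof (induction t rule: less_induct)
      case (less t)
      show ?case
      proof (intro allI impI)
        fix j assume j: "-2 \<le> j \<and> j \<le> K \<and> nat (j+2) = t"
        show "u j = U j"
        proof (cases "j < 2")
          case True
          then have "((j+2) mod 4) - 2 = j" using j by simp
          then show ?thesis unfolding U_def by simp
        next
          case False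
          have "u j = u (j-4)" using d[of "j-4"] j False by simp
          also have "\<dots> = U (j-4)" using less[of "nat (j-4+2)"] j False by auto
          also have "\<dots> = U j" using U4[of "j-4"] by simp
          finally show ?thesis .
        qed
      qed
    qed
    then show ?thesis using that by blast
  qed
  have U0: "U 0 = 0" using uU[of 0] u0 K by simp
  have w1: "U K = U (-1)" using uU[of K] uU[of "-1"] K by (simp add: u_def uP)
  have w2: "U (K-1) = U (-2)" using uU[of "K-1"] uU[of "-2"] K by (simp add: u_def uP)
  have c0: "u 1 + u 0 + u (-1) + u (-2) = C" using c[of 0] K by simp
  have w3: "U (K-2) = U 1"
    using c0 u0 uU[of "K-2"] uU[of 1] K w1 w2 uU[of K] uU[of "K-1"] uU[of "-1"] uU[of "-2"] unfolding C_def
    by simp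
  have s4: "U K + U (K-1) + U (K-2) + U (K-3) = U (1) + U 0 + U (-1) + U (-2)"
    using S4_const[where U=U, OF U4, of "K-1"] S4_const[where U=U, OF U4, of 0] by (simp add: algebra_simps)
  have w4: "U (K-3) = 0" using s4 w1 w2 w3 U0 by simp
  have Uk: "U (j+K+1) = U j" for j
  proof -
    define r where "r = ((j+2) mod 4) - 2"
    define q where "q = (j+2) div 4"
    have j: "j = r + 4*q" unfolding r_def q_def by presburger
    have r: "r \<in> {-2,-1,0,1}" unfolding r_def by auto
    have sh: "\<And>a. U (a + 4 * q) = U a" by (rule per4_shift[where U=U, OF U4])
    have "U (j+K+1) = U (r+K+1)" using sh[of "r+K+1"] j by (simp add: algebra_simps)
    moreover have "U j = U r" using sh[of r] j by simp
    moreover have "U (K-3) = U (K+1)" using U4[of "K-3"] by (simp add: algebra_simps)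
    moreover have "U (K-2) = U (K+2)" using U4[of "K-2"] by (simp add: algebra_simps)
    ultimately show ?thesis using r w1 w2 w3 w4 U0 by (auto simp: algebra_simps)
  qed
  have PP: "P m = Pf K U m" for m
  proof -
    consider "m \<le> 0" | "0 < m" "m \<le> K" | "K < m" "m \<le> 2*K" | "2*K < m" "m \<le> 3*K" | "3*K < m"
      by linarith
    then show ?thesis
    proof cases
      case 1 then show ?thesis using H0 unfolding Pf_def by simp
    next
      case 2 then show ?thesis using uP[of m] uU[of m] unfolding Pf_def by simp
    next
      case 3 then show ?thesis using a[of "m-K"] uU[of "m-K"] uU[of "m-K-1"] unfolding Pf_def by simp
    next
      case 4 then show ?thesis using b[of "m-2*K"] uU[of "m-2*K"] uU[of "m-2*K-1"] uU[of "m-2*K-2"]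
        unfolding Pf_def by simp
    next
      case 5 then show ?thesis using Hn[of m] S uU[of K] uU[of "K-1"] uU[of "K-2"] K unfolding Pf_def C_def
        by simp
    qed
  qed
  show ?thesis using U4 Uk U0 PP by blast
qed

lemma A_carrier: "A_mat n k \<in> carrier_mat n n" unfolding A_mat_def by simp

lemma psum_nonpos: "m \<le> 0 \<Longrightarrow> psum x n m = 0"
  unfolding psum_def by (rule sum.neutral) auto

lemma psum_ge: "m \<ge> int n \<Longrightarrow> psum x n m = psum x n (int n)"
  unfolding psum_def by (rule sum.cong) auto

lemma psum_step: "j < n \<Longrightarrow> x $ j = psum x n (int j + 1) - psum x n (int j)"
proof -
  assume j: "j < n"
  have "{i. i < n \<and> int i < int j + 1} = insert j {i. i < n \<and> int i < int j}" using j by auto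
  then show ?thesis unfolding psum_def by simp
qed

definition vec_of :: "nat \<Rightarrow> (int \<Rightarrow> real) \<Rightarrow> real vec" where
  "vec_of k U = vec (3*k) (\<lambda>j. Pf (int k) U (int j + 1) - Pf (int k) U (int j))"

lemma psum_vec_of:
  assumes k: "k \<ge> 1"
  shows "psum (vec_of k U) (3*k) m = Pf (int k) U m"
proof -
  let ?P = "Pf (int k) U"
  let ?n = "3*k"
  have tel: "psum (vec_of k U) ?n (int t) = ?P (int t)" if t: "t \<le> ?n" for t
  proof -
    have "{j. j < ?n \<and> int j < int t} = {..<t}" using t by auto
    then have "psum (vec_of k U) ?n (int t) = (\<Sum>j<t. ?P (int (Suc j)) - ?P (int j))"
      unfolding psum_def vec_of_def using t by (intro sum.cong) (auto simp: add.commute)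
    also have "\<dots> = ?P (int t) - ?P (int 0)" by (rule sum_lessThan_telescope)
    also have "?P (int 0) = 0" unfolding Pf_def by simp
    finally show ?thesis by simp
  qed
  consider "m \<le> 0" | "0 \<le> m" "m \<le> int ?n" | "m > int ?n" by linarith
  then show ?thesis
  proof cases
    case 1 then show ?thesis using psum_nonpos[of m] unfolding Pf_def by simp
  next
    case 2 then show ?thesis using tel[of "nat m"] by simp
  next
    case 3
    have "psum (vec_of k U) ?n m = psum (vec_of k U) ?n (int ?n)" by (rule psum_ge) (use 3 in simp)
    also have "\<dots> = ?P (int ?n)" using tel[of ?n] by simp
    also have "\<dots> = ?P m" using 3 k unfolding Pf_def by auto
    finally show ?thesis .
  qed
qed

lemma vec_of_kernel:
  assumes k: "k \<ge> 1"
    and p: "\<And>j. U (j + 4) = U j"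
    and pk: "\<And>j. U (j + int k + 1) = U j"
    and u0: "U 0 = 0"
  shows "vec_of k U \<in> mat_kernel (A_mat (3*k) k)"
proof (rule mat_kernelI[OF A_carrier])
  show "vec_of k U \<in> carrier_vec (3*k)" unfolding vec_of_def by simp
  show "A_mat (3 * k) k *\<^sub>v vec_of k U = 0\<^sub>v (3 * k)"
  proof (rule eq_vecI)
    show "dim_vec (A_mat (3 * k) k *\<^sub>v vec_of k U) = dim_vec (0\<^sub>v (3 * k) :: real vec)"
      unfolding A_mat_def by simp
    fix i assume "i < dim_vec (0\<^sub>v (3 * k) :: real vec)"
    then have i: "i < 3*k" by simp
    have dx: "dim_vec (vec_of k U) = 3*k" unfolding vec_of_def by simp
    have E: "Pf (int k) U (int i + int k + 1) + Pf (int k) U (int i - int k)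
        = Pf (int k) U (int i + 1) + Pf (int k) U (int i)"
      using Pf_E[of "int k" U "int i", OF _ p pk u0] k i by simp
    have "(A_mat (3*k) k *\<^sub>v vec_of k U) $ i = 0"
      unfolding row_formula[OF dx i] psum_vec_of[OF k] using E by (simp add: algebra_simps)
    then show "(A_mat (3*k) k *\<^sub>v vec_of k U) $ i = 0\<^sub>v (3 * k) $ i" using i by simp
  qed
qed

lemma kernel_U:
  assumes k: "k \<ge> 1" and x: "x \<in> mat_kernel (A_mat (3*k) k)"
  shows "\<exists>U. (\<forall>j. U (j+4) = U j) \<and> (\<forall>j. U (j + int k + 1) = U j) \<and> U 0 = 0 \<and>
     (\<forall>j < 3*k. x $ j = Pf (int k) U (int j + 1) - Pf (int k) U (int j))"
proof -
  have xc: "x \<in> carrier_vec (3*k)" and Ax: "A_mat (3*k) k *\<^sub>v x = 0\<^sub>v (3*k)"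
    using mat_kernelD[OF A_carrier x] by auto
  let ?P = "psum x (3*k)"
  have E: "?P (i + int k + 1) + ?P (i - int k) = ?P (i+1) + ?P i" if i: "0 \<le> i" "i < 3 * int k" for i
  proof -
    have i': "nat i < 3*k" using i by linarith
    have "(A_mat (3*k) k *\<^sub>v x) $ nat i = 0" using Ax i' by simp
    then show ?thesis using row_formula[of x "3*k" "nat i" k] xc i' i by simp
  qed
  obtain U where U: "\<forall>j. U (j+4) = U j" "\<forall>j. U (j + int k + 1) = U j" "U 0 = 0" "\<forall>m. ?P m = Pf (int k) U m"
  proof -
    have H0: "\<And>m. m \<le> 0 \<Longrightarrow> ?P m = 0" by (rule psum_nonpos)
    have Hn: "\<And>m. m \<ge> 3 * int k \<Longrightarrow> ?P m = ?P (3 * int k)"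
    proof -
      fix m :: int assume "m \<ge> 3 * int k"
      then have "?P m = ?P (int (3*k))" by (intro psum_ge) simp
      then show "?P m = ?P (3 * int k)" by simp
    qed
    have "int k \<ge> 1" using k by simp
    have "\<exists>U. (\<forall>j. U (j+4) = U j) \<and> (\<forall>j. U (j + int k + 1) = U j) \<and> U 0 = 0 \<and> (\<forall>m. ?P m = Pf (int k) U m)"
      apply (rule derive_U)
      subgoal by fact
      subgoal by (rule H0)
      subgoal by (rule Hn)
      subgoal by (rule E)
      done
    then show ?thesis using that by blast
  qed
  have "\<forall>j < 3*k. x $ j = Pf (int k) U (int j + 1) - Pf (int k) U (int j)"
    using psum_step[of _ "3*k" x] U(4) by simp
  then show ?thesis using U by blast
qed

lemma U_zero:
  fixes U :: "int \<Rightarrow> real"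
  assumes p: "\<And>j. U (j + 4) = U j" and z: "U 0 = 0" "U 1 = 0" "U 2 = 0" "U 3 = 0"
  shows "U j = 0"
proof -
  have "U j = U (j mod 4)" by (rule per4_mod[where U=U, OF p])
  moreover have "j mod 4 \<in> {0,1,2,3}" by auto
  ultimately show ?thesis using z by auto
qed

lemma shift_k:
  fixes U :: "int \<Rightarrow> real"
  assumes p: "\<And>j. U (j + 4) = U j" and pk: "\<And>j. U (j + int k + 1) = U j"
  shows "U (j + (int k + 1) mod 4) = U j"
proof -
  have "U (j + (int k + 1) mod 4 + 4 * ((int k + 1) div 4)) = U (j + (int k + 1) mod 4)"
    by (rule per4_shift[where U=U, OF p])
  moreover have "j + (int k + 1) mod 4 + 4 * ((int k + 1) div 4) = j + int k + 1" by simp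
  ultimately show ?thesis using pk[of j] by simp
qed

lemma Pf_small: "1 \<le> m \<Longrightarrow> m \<le> K \<Longrightarrow> Pf K U m = U m"
  unfolding Pf_def by simp

lemma Pf_0: "Pf K U 0 = 0" unfolding Pf_def by simp

lemma x_zero:
  assumes x: "x \<in> mat_kernel (A_mat (3*k) k)"
    and xU: "\<forall>j < 3*k. x $ j = Pf (int k) U (int j + 1) - Pf (int k) U (int j)"
    and U: "\<And>j. U j = 0"
  shows "x = 0\<^sub>v (3*k)"
proof -
  have xc: "x \<in> carrier_vec (3*k)" using mat_kernelD[OF A_carrier x] by auto
  have Pz: "Pf (int k) U m = 0" for m unfolding Pf_def using U by simp
  show ?thesis
  proof (rule eq_vecI)
    show "dim_vec x = dim_vec (0\<^sub>v (3*k) :: real vec)" using xc by simp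
    fix i assume "i < dim_vec (0\<^sub>v (3*k) :: real vec)"
    then show "x $ i = 0\<^sub>v (3*k) $ i" using xU Pz by simp
  qed
qed

theorem theorem8p9:
  fixes k :: nat
  assumes "k \<ge> 1"
  shows "(even k \<longrightarrow> N_null (3 * k) k = 0)
       \<and> (k mod 4 = 1 \<longrightarrow> N_null (3 * k) k = 1)
       \<and> (k mod 4 = 3 \<longrightarrow> N_null (3 * k) k = 3)"
proof (intro conjI impI)
  have k: "k \<ge> 1" by fact
  have K: "int k \<ge> 1" using k by simp
  {
    assume ev: "even k"
    show "N_null (3 * k) k = 0"
      unfolding N_null_def
    proof (rule kernel_dim_pivots[OF A_carrier, where d=0 and vs="\<lambda>_. 0\<^sub>v (3*k)" and ps="\<lambda>_. 0"])
      fix x assume x: "x \<in> mat_kernel (A_mat (3*k) k)"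
      obtain U where p: "\<And>j. U (j+4) = U j" and pk: "\<And>j. U (j + int k + 1) = U j" and u0: "U 0 = 0"
        and xU: "\<forall>j < 3*k. x $ j = Pf (int k) U (int j + 1) - Pf (int k) U (int j)"
        using kernel_U[OF k x] by blast
      have sh: "U (j + (int k + 1) mod 4) = U j" for j by (rule shift_k[where U=U, OF p pk])
      have "k mod 4 = 0 \<or> k mod 4 = 2" using ev by presburger
      then have "(int k + 1) mod 4 = 1 \<or> (int k + 1) mod 4 = 3" by presburger
      then have "U 1 = 0 \<and> U 2 = 0 \<and> U 3 = 0"
      proof
        assume r: "(int k + 1) mod 4 = 1"
        then show ?thesis using sh[of 0] sh[of 1] sh[of 2] u0 by simp
      next
        assume r: "(int k + 1) mod 4 = 3"
        have "U 3 = 0" using sh[of 0] r u0 by simp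
        moreover have "U 1 = U (-2)" using sh[of "-2"] r by simp
        moreover have "U (-2) = U 2" using p[of "-2"] by simp
        moreover have "U 2 = U (-1)" using sh[of "-1"] r by simp
        moreover have "U (-1) = U 3" using p[of "-1"] by simp
        ultimately show ?thesis by simp
      qed
      then have "U j = 0" for j using U_zero[where U=U, OF p u0] by blast
      then show "x = 0\<^sub>v (3*k)" by (rule x_zero[OF x xU])
    qed auto
  }
  {
    assume k1: "k mod 4 = 1"
    define V :: "int \<Rightarrow> real" where "V j = (if odd j then 1 else 0)" for j
    have Vp: "V (j+4) = V j" for j unfolding V_def by simp
    have Vk: "V (j + int k + 1) = V j" for j
    proof -
      have "even (int k + 1)" using k1 by presburger
      then show ?thesis unfolding V_def by auto
    qed
    have V0: "V 0 = 0" unfolding V_def by simp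
    show "N_null (3 * k) k = 1"
      unfolding N_null_def
    proof (rule kernel_dim_pivots[OF A_carrier, where d=1 and vs="\<lambda>_. vec_of k V" and ps="\<lambda>_. 0"])
      show "vec_of k V \<in> mat_kernel (A_mat (3*k) k)" by (rule vec_of_kernel[OF k Vp Vk V0])
      show "vec_of k V $ 0 = (if i = j then 1 else 0)" if "i < 1" "j < 1" for i j :: nat
      proof -
        have "i = j" using that by simp
        then show ?thesis
          using k Pf_small[of 1 "int k" V] Pf_0[of "int k" V] unfolding vec_of_def V_def by simp
      qed
      fix x assume x: "x \<in> mat_kernel (A_mat (3*k) k)" and x0: "\<And>j::nat. j < 1 \<Longrightarrow> x $ 0 = 0"
      obtain U where p: "\<And>j. U (j+4) = U j" and pk: "\<And>j. U (j + int k + 1) = U j" and u0: "U 0 = 0"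
        and xU: "\<forall>j < 3*k. x $ j = Pf (int k) U (int j + 1) - Pf (int k) U (int j)"
        using kernel_U[OF k x] by blast
      have sh: "U (j + (int k + 1) mod 4) = U j" for j by (rule shift_k[where U=U, OF p pk])
      have r: "(int k + 1) mod 4 = 2" using k1 by presburger
      have u1: "U 1 = 0" using xU x0[of 0] k Pf_small[of 1 "int k" U] Pf_0[of "int k" U] by simp
      have "U 2 = 0" using sh[of 0] r u0 by simp
      moreover have "U 3 = 0" using sh[of 1] r u1 by simp
      ultimately have "U j = 0" for j using U_zero[where U=U, OF p u0 u1] by blast
      then show "x = 0\<^sub>v (3*k)" by (rule x_zero[OF x xU])
    qed (use k in auto)
  }
  {
    assume k3: "k mod 4 = 3"
    have k3': "k \<ge> 3" using k3 by presburger
    define V :: "nat \<Rightarrow> int \<Rightarrow> real" where "V c j = (if j mod 4 \<ge> int c + 1 then 1 else 0)" for c j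
    have Vp: "V c (j+4) = V c j" for c j unfolding V_def by simp
    have Vk: "V c (j + int k + 1) = V c j" for c j
    proof -
      have "(j + int k + 1) mod 4 = j mod 4" using k3 by presburger
      then show ?thesis unfolding V_def by simp
    qed
    have V0: "V c 0 = 0" for c unfolding V_def by simp
    have Vval: "vec_of k (V c) $ j = V c (int j + 1) - V c (int j)" if "j < 3" for c j
    proof -
      have "Pf (int k) (V c) (int j + 1) = V c (int j + 1)" using that k3' by (intro Pf_small) auto
      moreover have "Pf (int k) (V c) (int j) = V c (int j)"
        using that k3' Pf_small[of "int j" "int k" "V c"] Pf_0[of "int k" "V c"] V0[of c]
        by (cases "j = 0") auto
      ultimately show ?thesis unfolding vec_of_def using that k3' by simp
    qed
    show "N_null (3 * k) k = 3"
      unfolding N_null_def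
    proof (rule kernel_dim_pivots[OF A_carrier, where d=3 and vs="\<lambda>c. vec_of k (V c)" and ps="\<lambda>c. c"])
      show "vec_of k (V c) \<in> mat_kernel (A_mat (3*k) k)" for c by (rule vec_of_kernel[OF k Vp Vk V0])
      show "j < 3 * k" if "j < 3" for j using that k by simp
      show "vec_of k (V i) $ j = (if i = j then 1 else 0)" if "i < 3" "j < 3" for i j
      proof -
        have "i \<in> {0,1,2}" "j \<in> {0,1,2}" using that by auto
        then show ?thesis unfolding Vval[OF that(2)] unfolding V_def by auto
      qed
      fix x assume x: "x \<in> mat_kernel (A_mat (3*k) k)" and x0: "\<And>j. j < 3 \<Longrightarrow> x $ j = 0"
      obtain U where p: "\<And>j. U (j+4) = U j" and pk: "\<And>j. U (j + int k + 1) = U j" and u0: "U 0 = 0"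
        and xU: "\<forall>j < 3*k. x $ j = Pf (int k) U (int j + 1) - Pf (int k) U (int j)"
        using kernel_U[OF k x] by blast
      have P1: "Pf (int k) U 1 = U 1" "Pf (int k) U 2 = U 2" "Pf (int k) U 3 = U 3"
        using k3' by (auto intro: Pf_small)
      have e0: "x $ 0 = U 1" using xU k P1 Pf_0[of "int k" U] by simp
      have e1: "x $ 1 = U 2 - U 1" using xU[rule_format, of 1] k P1 by simp
      have e2: "x $ 2 = U 3 - U 2" using xU[rule_format, of 2] k P1 by simp
      have u1: "U 1 = 0" using e0 x0[of 0] by simp
      have u2: "U 2 = 0" using e1 x0[of 1] u1 by simp
      have u3: "U 3 = 0" using e2 x0[of 2] u2 by simp
      have "U j = 0" for j using U_zero[where U=U, OF p u0 u1 u2 u3] .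
      then show "x = 0\<^sub>v (3*k)" by (rule x_zero[OF x xU])
    qed
  }
qed

end
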